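(* Let $N\ge1$, and let $q,\gamma\ne0,s_0,\xi_0\ne0$ and $u_1,\dots,u_N,v_1,\dots,v_N$ be generic complex numbers. Define $$\mathsf Z(u,v)=\frac{(1-\gamma)(q-\gamma^{-1}s_0^2)(1-uv)+(1-q)(1-\xi_0s_0u)(1-\xi_0^{-1}s_0v)}{(1-uv)(1-quv)},$$ $$\mathsf M_i(v)=\xi_0^{2i-N}v^{N-i-1}\Big\{(1-s_0\xi_0^{-1}v)(v\xi_0^{-1}-s_0)\prod_{l=1}^N\frac{1-qvu_l}{1-vu_l}-\gamma^{-1}q^{N-i}(\gamma-s_0\xi_0^{-1}v)(\gamma qv\xi_0^{-1}-s_0)\Big\},$$ $$\widetilde{\mathsf M}_i(u)=u^{N-i-1}\Big\{(1-s_0\xi_0u)(u-s_0/\xi_0)\prod_{l=1}^N\frac{1-quv_l}{1-uv_l}-\gamma^{-1}q^{N-i}(\gamma-s_0\xi_0u)(\gamma qu-s_0/\xi_0)\Big\}.$$ Then $$\frac{\prod_{i,j=1}^N(1-qu_iv_j)}{\prod_{1\le i<j\le N}(u_i-u_j)(v_i-v_j)}\det\big[\mathsf Z(u_i,v_j)\big]_{i,j=1}^N=\frac{\det[\mathsf M_i(v_j)]_{i,j=1}^N}{\prod_{1\le i<j\le N}(v_i-v_j)}=\frac{\det[\widetilde{\mathsf M}_i(u_j)]_{i,j=1}^N}{\prod_{1\le i<j\le N}(u_i-u_j)}.$$ *)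

theory Defs
  imports Complex_Main "Jordan_Normal_Form.Determinant"
begin

text \<open>Parameters: q, gamma, s0, xi0. Vectors u, v are indexed 1..N.\<close>

definition ZZ :: "complex \<Rightarrow> complex \<Rightarrow> complex \<Rightarrow> complex \<Rightarrow> complex \<Rightarrow> complex \<Rightarrow> complex" where
  "ZZ q \<gamma> s0 \<xi>0 u v =
     ((1 - \<gamma>) * (q - inverse \<gamma> * s0^2) * (1 - u*v)
      + (1 - q) * (1 - \<xi>0 * s0 * u) * (1 - inverse \<xi>0 * s0 * v))
     / ((1 - u*v) * (1 - q*u*v))"

definition MM :: "nat \<Rightarrow> complex \<Rightarrow> complex \<Rightarrow> complex \<Rightarrow> complex \<Rightarrow> (nat \<Rightarrow> complex) \<Rightarrow> nat \<Rightarrow> complex \<Rightarrow> complex" where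
  "MM N q \<gamma> s0 \<xi>0 u i v =
     \<xi>0 powi (2 * int i - int N) * v powi (int N - int i - 1) *
     ((1 - s0 / \<xi>0 * v) * (v / \<xi>0 - s0) * (\<Prod>l\<in>{1..N}. (1 - q*v*u l) / (1 - v*u l))
      - inverse \<gamma> * q^(N - i) * (\<gamma> - s0 / \<xi>0 * v) * (\<gamma> * q * v / \<xi>0 - s0))"

definition MMt :: "nat \<Rightarrow> complex \<Rightarrow> complex \<Rightarrow> complex \<Rightarrow> complex \<Rightarrow> (nat \<Rightarrow> complex) \<Rightarrow> nat \<Rightarrow> complex \<Rightarrow> complex" where
  "MMt N q \<gamma> s0 \<xi>0 v i u =
     u powi (int N - int i - 1) *
     ((1 - s0 * \<xi>0 * u) * (u - s0 / \<xi>0) * (\<Prod>l\<in>{1..N}. (1 - q*u*v l) / (1 - u*v l))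
      - inverse \<gamma> * q^(N - i) * (\<gamma> - s0 * \<xi>0 * u) * (\<gamma> * q * u - s0 / \<xi>0))"

definition vdm :: "nat \<Rightarrow> (nat \<Rightarrow> complex) \<Rightarrow> complex" where
  "vdm N x = (\<Prod>i\<in>{1..N}. \<Prod>j\<in>{i+1..N}. x i - x j)"

end

theory Submission
  imports Defs "HOL-Computational_Algebra.Polynomial"
begin


lemma lagrange_interp:
  fixes x :: "nat \<Rightarrow> complex"
  assumes inj: "inj_on x {..<n}" and m: "m < n"
  shows "(\<Sum>k<n. x k ^ m * (\<Prod>l\<in>{..<n}-{k}. (z - x l)) / (\<Prod>l\<in>{..<n}-{k}. (x k - x l))) = z ^ m"
proof -
  define p where "p = (\<Sum>k<n. smult (x k ^ m / (\<Prod>l\<in>{..<n}-{k}. (x k - x l))) (\<Prod>l\<in>{..<n}-{k}. [:- x l, 1:]))"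
  have pp: "poly p z = (\<Sum>k<n. x k ^ m * (\<Prod>l\<in>{..<n}-{k}. (z - x l)) / (\<Prod>l\<in>{..<n}-{k}. (x k - x l)))" for z
    unfolding p_def by (simp add: poly_sum poly_prod)
  have dk: "degree (smult (x k ^ m / (\<Prod>l\<in>{..<n}-{k}. (x k - x l))) (\<Prod>l\<in>{..<n}-{k}. [:- x l, 1:])) \<le> n - 1" if "k < n" for k
  proof -
    have "degree (\<Prod>l\<in>{..<n}-{k}. [:- x l, 1:]) \<le> (\<Sum>l\<in>{..<n}-{k}. degree [:- x l, 1:])"
      using degree_prod_sum_le[of "{..<n}-{k}" "\<lambda>l. [:- x l, 1:]"] by (simp add: o_def)
    also have "\<dots> = n - 1" using \<open>k < n\<close> by simp
    finally show ?thesis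
      by (meson degree_smult_le order_trans)
  qed
  have dp: "degree p \<le> n - 1"
    unfolding p_def by (rule degree_sum_le) (use dk in auto)
  have roots: "poly p (x j) = poly (monom 1 m) (x j)" if j: "j < n" for j
  proof -
    have "poly p (x j) = (\<Sum>k<n. x k ^ m * (\<Prod>l\<in>{..<n}-{k}. (x j - x l)) / (\<Prod>l\<in>{..<n}-{k}. (x k - x l)))"
      by (rule pp)
    also have "\<dots> = x j ^ m * (\<Prod>l\<in>{..<n}-{j}. (x j - x l)) / (\<Prod>l\<in>{..<n}-{j}. (x j - x l))"
    proof -
      have "\<forall>k\<in>{..<n}-{j}. x k ^ m * (\<Prod>l\<in>{..<n}-{k}. (x j - x l)) / (\<Prod>l\<in>{..<n}-{k}. (x k - x l)) = 0"
      proof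
        fix k assume "k \<in> {..<n}-{j}"
        then have "(\<Prod>l\<in>{..<n}-{k}. (x j - x l)) = 0"
          using j by (intro prod_zero) auto
        then show "x k ^ m * (\<Prod>l\<in>{..<n}-{k}. (x j - x l)) / (\<Prod>l\<in>{..<n}-{k}. (x k - x l)) = 0" by simp
      qed
      then have "(\<Sum>k\<in>{..<n}-{j}. x k ^ m * (\<Prod>l\<in>{..<n}-{k}. (x j - x l)) / (\<Prod>l\<in>{..<n}-{k}. (x k - x l))) = 0"
        by (intro sum.neutral) blast
      then show ?thesis using j by (subst sum.remove[of "{..<n}" j]) auto
    qed
    also have "\<dots> = x j ^ m"
    proof -
      have "(\<Prod>l\<in>{..<n}-{j}. (x j - x l)) \<noteq> 0"
        using inj j by (auto simp: inj_on_def)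
      then show ?thesis by simp
    qed
    finally show ?thesis by (simp add: poly_monom)
  qed
  have cardA: "card (x ` {..<n}) = n" using inj by (simp add: card_image)
  have "p = monom 1 m"
    by (rule poly_eqI_degree[of "x ` {..<n}"]) (use roots dp cardA m in \<open>auto simp: degree_monom_eq\<close>)
  then have "poly p z = z ^ m" by (simp add: poly_monom)
  then show ?thesis using pp by simp
qed

lemma lagrange_c:
  fixes x :: "nat \<Rightarrow> complex"
  assumes inj: "inj_on x {..<n}" and m: "m < n"
  shows "(\<Sum>k<n. x k ^ m * (\<Prod>l\<in>{..<n}-{k}. (1 - c * x l)) / (\<Prod>l\<in>{..<n}-{k}. (x k - x l))) = c ^ (n - 1 - m)"
proof -
  define R where "R = (\<Sum>k<n. smult (x k ^ m / (\<Prod>l\<in>{..<n}-{k}. (x k - x l))) (\<Prod>l\<in>{..<n}-{k}. [:1, - x l:]))"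
  have pR: "poly R c = (\<Sum>k<n. x k ^ m * (\<Prod>l\<in>{..<n}-{k}. (1 - c * x l)) / (\<Prod>l\<in>{..<n}-{k}. (x k - x l)))" for c
    unfolding R_def by (simp add: poly_sum poly_prod mult.commute)
  have dk: "degree (smult (x k ^ m / (\<Prod>l\<in>{..<n}-{k}. (x k - x l))) (\<Prod>l\<in>{..<n}-{k}. [:1, - x l:])) \<le> n - 1" if "k < n" for k
  proof -
    have "degree (\<Prod>l\<in>{..<n}-{k}. [:1, - x l:]) \<le> (\<Sum>l\<in>{..<n}-{k}. degree [:1, - x l:])"
      using degree_prod_sum_le[of "{..<n}-{k}" "\<lambda>l. [:1, - x l:]"] by (simp add: o_def)
    also have "\<dots> \<le> (\<Sum>l\<in>{..<n}-{k}. 1)" by (intro sum_mono) simp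
    also have "\<dots> = n - 1" using \<open>k < n\<close> by simp
    finally show ?thesis
      by (meson degree_smult_le order_trans)
  qed
  have dR: "degree R \<le> n - 1"
    unfolding R_def by (rule degree_sum_le) (use dk in auto)
  have nz: "poly R c = poly (monom 1 (n - 1 - m)) c" if c0: "c \<noteq> 0" for c
  proof -
    have e: "(\<Prod>l\<in>{..<n}-{k}. (1 - c * x l)) = c ^ (n - 1) * (\<Prod>l\<in>{..<n}-{k}. (1/c - x l))" if "k < n" for k
    proof -
      have "(\<Prod>l\<in>{..<n}-{k}. (1 - c * x l)) = (\<Prod>l\<in>{..<n}-{k}. c * (1/c - x l))"
        using c0 by (intro prod.cong) (auto simp: field_simps)
      also have "\<dots> = c ^ card ({..<n}-{k}) * (\<Prod>l\<in>{..<n}-{k}. (1/c - x l))"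
        by (simp add: prod.distrib)
      finally show ?thesis using that by simp
    qed
    have "poly R c = (\<Sum>k<n. c ^ (n - 1) * (x k ^ m * (\<Prod>l\<in>{..<n}-{k}. (1/c - x l)) / (\<Prod>l\<in>{..<n}-{k}. (x k - x l))))"
      unfolding pR by (intro sum.cong) (auto simp: e)
    also have "\<dots> = c ^ (n - 1) * (\<Sum>k<n. x k ^ m * (\<Prod>l\<in>{..<n}-{k}. (1/c - x l)) / (\<Prod>l\<in>{..<n}-{k}. (x k - x l)))"
      by (rule sum_distrib_left[symmetric])
    also have "\<dots> = c ^ (n - 1) * (1/c) ^ m"
      by (simp only: lagrange_interp[OF inj m])
    also have "\<dots> = c ^ (n - 1 - m)"
      using c0 m by (simp add: power_diff power_one_over divide_simps)
    finally show ?thesis by (simp add: poly_monom)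
  qed
  define A where "A = (of_nat :: nat \<Rightarrow> complex) ` {1..n+1}"
  have cA: "card A = n + 1" unfolding A_def by (subst card_image) (auto simp: inj_on_def)
  have "R = monom 1 (n - 1 - m)"
    by (rule poly_eqI_degree[of A]) (use nz dR cA in \<open>auto simp: A_def degree_monom_eq\<close>)
  then show ?thesis using pR[of c] by (simp add: poly_monom)
qed



lemma det_scale_rows:
  fixes c :: "nat \<Rightarrow> 'a::comm_ring_1"
  shows "det (mat n n (\<lambda>(i,j). c i * f i j)) = (\<Prod>i<n. c i) * det (mat n n (\<lambda>(i,j). f i j))"
proof -
  have A: "mat n n (\<lambda>(i,j). c i * f i j) \<in> carrier_mat n n" "mat n n (\<lambda>(i,j). f i j) \<in> carrier_mat n n" by auto
  show ?thesis unfolding det_def'[OF A(1)] det_def'[OF A(2)] sum_distrib_left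
  proof (rule sum.cong[OF refl])
    fix p assume p: "p \<in> {p. p permutes {0..<n}}"
    have "(\<Prod>i = 0..<n. mat n n (\<lambda>(i,j). c i * f i j) $$ (i, p i)) = (\<Prod>i = 0..<n. c i * f i (p i))"
      using p by (intro prod.cong) (auto simp: permutes_in_image)
    also have "\<dots> = (\<Prod>i<n. c i) * (\<Prod>i = 0..<n. mat n n (\<lambda>(i,j). f i j) $$ (i, p i))"
      using p by (auto simp: prod.distrib atLeast0LessThan permutes_in_image intro!: prod.cong)
    finally show "signof p * (\<Prod>i = 0..<n. mat n n (\<lambda>(i,j). c i * f i j) $$ (i, p i)) =
      (\<Prod>i<n. c i) * (signof p * (\<Prod>i = 0..<n. mat n n (\<lambda>(i,j). f i j) $$ (i, p i)))" by simp
  qed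
qed

lemma det_scale_cols:
  fixes c :: "nat \<Rightarrow> 'a::comm_ring_1"
  shows "det (mat n n (\<lambda>(i,j). f i j * c j)) = (\<Prod>j<n. c j) * det (mat n n (\<lambda>(i,j). f i j))"
proof -
  have A: "mat n n (\<lambda>(i,j). f i j * c j) \<in> carrier_mat n n" "mat n n (\<lambda>(i,j). f i j) \<in> carrier_mat n n" by auto
  show ?thesis unfolding det_def'[OF A(1)] det_def'[OF A(2)] sum_distrib_left
  proof (rule sum.cong[OF refl])
    fix p assume p: "p \<in> {p. p permutes {0..<n}}"
    then have pp: "p permutes {0..<n}" by simp
    have "(\<Prod>i = 0..<n. mat n n (\<lambda>(i,j). f i j * c j) $$ (i, p i)) = (\<Prod>i = 0..<n. f i (p i) * c (p i))"
      using p by (intro prod.cong) (auto simp: permutes_in_image)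
    also have "\<dots> = (\<Prod>i = 0..<n. c (p i)) * (\<Prod>i = 0..<n. f i (p i))"
      by (simp add: prod.distrib mult.commute)
    also have "(\<Prod>i = 0..<n. c (p i)) = (\<Prod>i<n. c i)"
      using prod.permute[OF pp, of c] by (simp add: atLeast0LessThan o_def)
    also have "(\<Prod>i = 0..<n. f i (p i)) = (\<Prod>i = 0..<n. mat n n (\<lambda>(i,j). f i j) $$ (i, p i))"
      using p by (intro prod.cong) (auto simp: permutes_in_image)
    finally show "signof p * (\<Prod>i = 0..<n. mat n n (\<lambda>(i,j). f i j * c j) $$ (i, p i)) =
      (\<Prod>i<n. c i) * (signof p * (\<Prod>i = 0..<n. mat n n (\<lambda>(i,j). f i j) $$ (i, p i)))" by simp
  qed
qed

lemma mat_mult_entry: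
  "mat n n (\<lambda>(i,j). (\<Sum>k<n. a i k * b k j)) = mat n n (\<lambda>(i,k). a i k) * mat n n (\<lambda>(k,j). b k j)"
  by (rule eq_matI) (auto simp: scalar_prod_def atLeast0LessThan intro!: sum.cong)

lemma det_mat_mult_entry:
  fixes a b :: "nat \<Rightarrow> nat \<Rightarrow> 'a::comm_ring_1"
  shows "det (mat n n (\<lambda>(i,j). (\<Sum>k<n. a i k * b k j))) = det (mat n n (\<lambda>(i,k). a i k)) * det (mat n n (\<lambda>(k,j). b k j))"
  unfolding mat_mult_entry by (rule det_mult) auto



lemma prod_shift0: "(\<Prod>k<Suc n. g k) = g 0 * (\<Prod>k<n. g (Suc k))"
  using prod.atLeast0_lessThan_Suc_shift[of g n] by (simp add: atLeast0LessThan o_def)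

lemma prod_gl_shift: "(\<Prod>l\<in>{Suc k<..<Suc n}. g l) = (\<Prod>l\<in>{k<..<n}. g (Suc l))"
  unfolding atLeastSucLessThan_greaterThanLessThan[symmetric] by (rule prod.shift_bounds_Suc_ivl)

lemma vandermonde_det:
  fixes x :: "nat \<Rightarrow> 'a::comm_ring_1"
  shows "det (mat n n (\<lambda>(r,k). x k ^ r)) = (\<Prod>k<n. \<Prod>l\<in>{k<..<n}. (x l - x k))"
proof (induction n arbitrary: x)
  case 0
  then show ?case by simp
next
  case (Suc n)
  let ?L = "mat (Suc n) (Suc n) (\<lambda>(i,j). (if j = i then 1 else 0) + (if Suc j = i then - x 0 else 0) :: 'a)"
  let ?V = "mat (Suc n) (Suc n) (\<lambda>(r,k). x k ^ r)"
  let ?B = "mat (Suc n) (Suc n) (\<lambda>(i,j). x j ^ i - (if i = 0 then 0 else x 0 * x j ^ (i - 1)))"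
  have dL: "det ?L = 1"
    by (subst det_lower_triangular[of "Suc n"]) (auto simp: prod_list_diag_prod)
  have LV: "?L * ?V = ?B"
  proof (rule eq_matI)
    fix i j assume ij: "i < dim_row ?B" "j < dim_col ?B"
    have "(?L * ?V) $$ (i,j) = (\<Sum>k<Suc n. ((if k = i then 1 else 0) + (if Suc k = i then - x 0 else 0)) * x j ^ k)"
      using ij by (auto simp: scalar_prod_def atLeast0LessThan intro!: sum.cong)
    also have "\<dots> = (\<Sum>k<Suc n. (if k = i then x j ^ k else 0) + (if Suc k = i then - x 0 * x j ^ k else 0))"
      by (intro sum.cong) auto
    also have "\<dots> = (\<Sum>k<Suc n. (if k = i then x j ^ k else 0)) + (\<Sum>k<Suc n. (if Suc k = i then - x 0 * x j ^ k else 0))"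
      by (rule sum.distrib)
    also have "\<dots> = ?B $$ (i,j)"
    proof (cases i)
      case 0
      then show ?thesis using ij by simp
    next
      case (Suc i')
      have "(\<Sum>k<Suc n. (if Suc k = i then - x 0 * x j ^ k else 0)) = (\<Sum>k<Suc n. (if k = i' then - x 0 * x j ^ k else 0))"
        using Suc by (intro sum.cong) auto
      then show ?thesis using ij Suc by simp
    qed
    finally show "(?L * ?V) $$ (i,j) = ?B $$ (i,j)" .
  qed auto
  have "det ?V = det ?B"
    using det_mult[of ?L "Suc n" ?V] dL LV by simp
  also have "det ?B = (\<Sum>i<Suc n. ?B $$ (i,0) * cofactor ?B i 0)"
    by (rule laplace_expansion_column) auto
  also have "\<dots> = ?B $$ (0,0) * cofactor ?B 0 0"
    by (subst sum.remove[of _ 0]) (auto intro!: sum.neutral simp: power_eq_if)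
  also have "\<dots> = det (mat_delete ?B 0 0)" by (simp add: cofactor_def)
  also have "mat_delete ?B 0 0 = mat n n (\<lambda>(i,j). x (Suc j) ^ i * (x (Suc j) - x 0))"
    by (rule eq_matI) (auto simp: mat_delete_def algebra_simps)
  also have "det \<dots> = (\<Prod>j<n. (x (Suc j) - x 0)) * det (mat n n (\<lambda>(i,j). x (Suc j) ^ i))"
    by (rule det_scale_cols)
  also have "\<dots> = (\<Prod>k<Suc n. \<Prod>l\<in>{k<..<Suc n}. (x l - x k))"
  proof -
    have e1: "(\<Prod>l\<in>{0<..<Suc n}. x l - x 0) = (\<Prod>j<n. (x (Suc j) - x 0))"
      unfolding atLeastSucLessThan_greaterThanLessThan[symmetric] prod.shift_bounds_Suc_ivl
      by (simp add: atLeast0LessThan)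
    have "(\<Prod>k<Suc n. \<Prod>l\<in>{k<..<Suc n}. (x l - x k)) = (\<Prod>l\<in>{0<..<Suc n}. x l - x 0) * (\<Prod>k<n. \<Prod>l\<in>{Suc k<..<Suc n}. x l - x (Suc k))"
      by (rule prod_shift0)
    also have "\<dots> = (\<Prod>j<n. (x (Suc j) - x 0)) * (\<Prod>k<n. \<Prod>l\<in>{k<..<n}. x (Suc l) - x (Suc k))"
      unfolding e1 prod_gl_shift ..
    finally show ?thesis using Suc.IH[of "\<lambda>j. x (Suc j)"] by simp
  qed
  finally show ?case .
qed



lemma lagrange_frac:
  fixes x :: "nat \<Rightarrow> complex"
  assumes inj: "inj_on x {..<n}" and m: "m < n" and nz: "\<And>l. l < n \<Longrightarrow> 1 - c * x l \<noteq> 0"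
  shows "(\<Sum>k<n. x k ^ m / (\<Prod>l\<in>{..<n}-{k}. (x k - x l)) * (1 / (1 - c * x k))) = c ^ (n - 1 - m) / (\<Prod>l<n. (1 - c * x l))"
proof -
  have P: "(\<Prod>l<n. (1 - c * x l)) = (1 - c * x k) * (\<Prod>l\<in>{..<n}-{k}. (1 - c * x l))" if "k < n" for k
    using that by (subst prod.remove[of _ k]) auto
  have Pnz: "(\<Prod>l<n. (1 - c * x l)) \<noteq> 0" using nz by auto
  have "(\<Sum>k<n. x k ^ m / (\<Prod>l\<in>{..<n}-{k}. (x k - x l)) * (1 / (1 - c * x k)))
     = (\<Sum>k<n. x k ^ m * (\<Prod>l\<in>{..<n}-{k}. (1 - c * x l)) / (\<Prod>l\<in>{..<n}-{k}. (x k - x l))) / (\<Prod>l<n. (1 - c * x l))"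
    unfolding sum_divide_distrib
  proof (intro sum.cong refl)
    fix k assume k: "k \<in> {..<n}"
    then have h1: "(1 - c * x k) \<noteq> 0" using nz by auto
    have h2: "(\<Prod>l\<in>{..<n}-{k}. (1 - c * x l)) \<noteq> 0" using nz by (auto simp: prod_zero_iff)
    have h3: "(\<Prod>l\<in>{..<n}-{k}. (x k - x l)) \<noteq> 0" using inj k by (auto simp: prod_zero_iff inj_on_def)
    show "x k ^ m / (\<Prod>l\<in>{..<n}-{k}. (x k - x l)) * (1 / (1 - c * x k)) =
       x k ^ m * (\<Prod>l\<in>{..<n}-{k}. (1 - c * x l)) / (\<Prod>l\<in>{..<n}-{k}. (x k - x l)) / (\<Prod>l<n. (1 - c * x l))"
      using k h1 h2 h3 by (subst P[of k]) (auto simp: field_simps)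
  qed
  also have "\<dots> = c ^ (n - 1 - m) / (\<Prod>l<n. (1 - c * x l))"
    by (simp only: lagrange_c[OF inj m])
  finally show ?thesis .
qed

definition alphaZ :: "complex \<Rightarrow> complex \<Rightarrow> complex \<Rightarrow> complex" where
  "alphaZ s0 \<xi>0 w = (1 - s0 / \<xi>0 * w) * (1 - s0 * \<xi>0 / w)"
definition betaZ :: "complex \<Rightarrow> complex \<Rightarrow> complex \<Rightarrow> complex \<Rightarrow> complex \<Rightarrow> complex" where
  "betaZ q \<gamma> s0 \<xi>0 w = (1 - \<gamma>) * (q - inverse \<gamma> * s0^2) - (1 - s0 / \<xi>0 * w) * (q - s0 * \<xi>0 / w)"

lemma ZZ_split_num:
  fixes w x q \<gamma> \<xi>0 s0 :: complex
  assumes "w \<noteq> 0" "\<gamma> \<noteq> 0" "\<xi>0 \<noteq> 0"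
  shows "alphaZ s0 \<xi>0 w * (1 - q*x*w) + betaZ q \<gamma> s0 \<xi>0 w * (1 - x*w)
   = (1 - \<gamma>) * (q - inverse \<gamma> * s0^2) * (1 - x*w)
      + (1 - q) * (1 - \<xi>0 * s0 * x) * (1 - inverse \<xi>0 * s0 * w)"
  using assms unfolding alphaZ_def betaZ_def by (simp add: field_simps)

lemma ZZ_split:
  assumes "w \<noteq> 0" "\<gamma> \<noteq> 0" "\<xi>0 \<noteq> 0" "1 - x * w \<noteq> 0" "1 - q * x * w \<noteq> 0"
  shows "ZZ q \<gamma> s0 \<xi>0 x w = alphaZ s0 \<xi>0 w * (1 / (1 - w * x)) + betaZ q \<gamma> s0 \<xi>0 w * (1 / (1 - (q * w) * x))"
proof -
  have e1: "w * x = x * w" "q * w * x = q * x * w" by (simp_all add: mult_ac)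
  have "alphaZ s0 \<xi>0 w * (1 / (1 - w * x)) + betaZ q \<gamma> s0 \<xi>0 w * (1 / (1 - (q * w) * x))
     = (alphaZ s0 \<xi>0 w * (1 - q*x*w) + betaZ q \<gamma> s0 \<xi>0 w * (1 - x*w)) / ((1 - x*w) * (1 - q*x*w))"
    unfolding e1 using assms(4,5) by (simp add: field_simps)
  also have "\<dots> = ZZ q \<gamma> s0 \<xi>0 x w"
    unfolding ZZ_split_num[OF assms(1-3)] ZZ_def ..
  finally show ?thesis by simp
qed



lemma row_ident:
  fixes x :: "nat \<Rightarrow> complex"
  assumes inj: "inj_on x {..<n}" and r: "r < n" and w: "w \<noteq> 0" and g: "\<gamma> \<noteq> 0" and xi: "\<xi>0 \<noteq> 0"
    and d1: "\<And>l. l < n \<Longrightarrow> 1 - x l * w \<noteq> 0" and d2: "\<And>l. l < n \<Longrightarrow> 1 - q * x l * w \<noteq> 0"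
  shows "(\<Sum>k<n. (x k ^ r / (\<Prod>l\<in>{..<n}-{k}. (x k - x l))) * ((\<Prod>l<n. (1 - q * x l * w)) * ZZ q \<gamma> s0 \<xi>0 (x k) w))
    = w ^ (n - 1 - r) * (alphaZ s0 \<xi>0 w * (\<Prod>l<n. (1 - q * w * x l) / (1 - w * x l)) + betaZ q \<gamma> s0 \<xi>0 w * q ^ (n - 1 - r))"
proof -
  define D where "D = (\<Prod>l<n. (1 - q * x l * w))"
  define e where "e k = x k ^ r / (\<Prod>l\<in>{..<n}-{k}. (x k - x l))" for k
  have c1: "1 - w * x l \<noteq> 0" if "l < n" for l using d1[OF that] by (simp add: mult.commute)
  have c2: "1 - (q * w) * x l \<noteq> 0" if "l < n" for l using d2[OF that] by (simp add: mult_ac)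
  have "(\<Sum>k<n. e k * (D * ZZ q \<gamma> s0 \<xi>0 (x k) w))
      = (\<Sum>k<n. D * alphaZ s0 \<xi>0 w * (e k * (1 / (1 - w * x k))) + D * betaZ q \<gamma> s0 \<xi>0 w * (e k * (1 / (1 - (q * w) * x k))))"
    by (intro sum.cong refl, subst ZZ_split[OF w g xi d1 d2]) (auto simp: algebra_simps)
  also have "\<dots> = D * alphaZ s0 \<xi>0 w * (\<Sum>k<n. e k * (1 / (1 - w * x k))) + D * betaZ q \<gamma> s0 \<xi>0 w * (\<Sum>k<n. e k * (1 / (1 - (q * w) * x k)))"
    by (simp add: sum.distrib sum_distrib_left)
  also have "(\<Sum>k<n. e k * (1 / (1 - w * x k))) = w ^ (n - 1 - r) / (\<Prod>l<n. (1 - w * x l))"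
    unfolding e_def by (rule lagrange_frac[OF inj r c1])
  also have "(\<Sum>k<n. e k * (1 / (1 - (q * w) * x k))) = (q * w) ^ (n - 1 - r) / (\<Prod>l<n. (1 - (q * w) * x l))"
    unfolding e_def by (rule lagrange_frac[OF inj r c2])
  also have Deq: "D = (\<Prod>l<n. (1 - (q * w) * x l))" unfolding D_def by (intro prod.cong) (auto simp: mult_ac)
  finally have X: "(\<Sum>k<n. e k * ((\<Prod>l<n. 1 - q * w * x l) * ZZ q \<gamma> s0 \<xi>0 (x k) w)) =
    (\<Prod>l<n. 1 - q * w * x l) * alphaZ s0 \<xi>0 w * (w ^ (n - 1 - r) / (\<Prod>l<n. 1 - w * x l)) +
    (\<Prod>l<n. 1 - q * w * x l) * betaZ q \<gamma> s0 \<xi>0 w * ((q * w) ^ (n - 1 - r) / (\<Prod>l<n. 1 - q * w * x l))" .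
  moreover have "(\<Prod>l<n. 1 - q * w * x l) \<noteq> 0" using c2 by (auto simp: prod_zero_iff)
  moreover have "(\<Prod>l<n. (1 - q * w * x l) / (1 - w * x l)) = (\<Prod>l<n. 1 - q * w * x l) / (\<Prod>l<n. 1 - w * x l)"
    by (rule prod_dividef)
  ultimately have "(\<Sum>k<n. e k * (D * ZZ q \<gamma> s0 \<xi>0 (x k) w))
    = w ^ (n - 1 - r) * (alphaZ s0 \<xi>0 w * (\<Prod>l<n. (1 - q * w * x l) / (1 - w * x l)) + betaZ q \<gamma> s0 \<xi>0 w * q ^ (n - 1 - r))"
    unfolding Deq by (simp add: field_simps power_mult_distrib)
  then show ?thesis unfolding D_def e_def .
qed



lemma alpha_eq:
  fixes w s0 \<xi>0 :: complex assumes "w \<noteq> 0" "\<xi>0 \<noteq> 0"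
  shows "\<xi>0 / w * ((1 - s0 / \<xi>0 * w) * (w / \<xi>0 - s0)) = alphaZ s0 \<xi>0 w"
  using assms unfolding alphaZ_def by (simp add: field_simps)

lemma beta_eq:
  fixes w s0 \<xi>0 q \<gamma> :: complex assumes "w \<noteq> 0" "\<xi>0 \<noteq> 0" "\<gamma> \<noteq> 0"
  shows "\<xi>0 / w * (- (inverse \<gamma> * (\<gamma> - s0 / \<xi>0 * w) * (\<gamma> * q * w / \<xi>0 - s0))) = betaZ q \<gamma> s0 \<xi>0 w"
  using assms unfolding betaZ_def by (simp add: field_simps power2_eq_square)

lemma MM_aux:
  fixes x c W w A1 P g qk B1 B2 :: complex
  shows "x * c * (W / w) * (A1 * P - g * qk * B1 * B2) = c * W * (x / w * A1 * P + qk * (x / w * (- (g * B1 * B2))))"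
  by (simp add: algebra_simps)

lemma MM_eq:
  fixes u :: "nat \<Rightarrow> complex"
  assumes r: "r < n" and w: "w \<noteq> 0" and g: "\<gamma> \<noteq> 0" and xi: "\<xi>0 \<noteq> 0"
  shows "MM n q \<gamma> s0 \<xi>0 u (Suc r) w = \<xi>0 powi (2 * int r + 1 - int n) *
     (w ^ (n - 1 - r) * (alphaZ s0 \<xi>0 w * (\<Prod>l<n. (1 - q * w * u (Suc l)) / (1 - w * u (Suc l))) + betaZ q \<gamma> s0 \<xi>0 w * q ^ (n - 1 - r)))"
proof -
  define P where "P = (\<Prod>l<n. (1 - q * w * u (Suc l)) / (1 - w * u (Suc l)))"
  have P': "(\<Prod>l\<in>{1..n}. (1 - q * w * u l) / (1 - w * u l)) = P"
    unfolding P_def using prod.atLeast1_atMost_eq[of "\<lambda>l. (1 - q * w * u l) / (1 - w * u l)" n] by (simp only: One_nat_def)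
  have k: "n - Suc r = n - 1 - r" by simp
  have p1: "\<xi>0 powi (2 * int (Suc r) - int n) = \<xi>0 * \<xi>0 powi (2 * int r + 1 - int n)"
  proof -
    have e: "2 * int (Suc r) - int n = (2 * int r + 1 - int n) + 1" by simp
    show ?thesis unfolding e by (rule power_int_add_1') (use xi in auto)
  qed
  have p2: "w powi (int n - int (Suc r) - 1) = w ^ (n - 1 - r) / w"
  proof -
    have e: "int n - int (Suc r) - 1 = int (n - 1 - r) - 1" using r by simp
    show ?thesis unfolding e power_int_diff[OF disjI1[OF w]] power_int_of_nat by simp
  qed
  have "MM n q \<gamma> s0 \<xi>0 u (Suc r) w = \<xi>0 powi (2 * int r + 1 - int n) * w ^ (n - 1 - r) *
     (\<xi>0 / w * ((1 - s0 / \<xi>0 * w) * (w / \<xi>0 - s0)) * P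
      + q ^ (n - 1 - r) * (\<xi>0 / w * (- (inverse \<gamma> * (\<gamma> - s0 / \<xi>0 * w) * (\<gamma> * q * w / \<xi>0 - s0)))))"
    unfolding MM_def P' k p1 p2 by (rule MM_aux)
  also have "\<dots> = \<xi>0 powi (2 * int r + 1 - int n) * (w ^ (n - 1 - r) * (alphaZ s0 \<xi>0 w * P + betaZ q \<gamma> s0 \<xi>0 w * q ^ (n - 1 - r)))"
    unfolding alpha_eq[OF w xi] beta_eq[OF w xi g] by (simp add: algebra_simps)
  finally show ?thesis unfolding P_def .
qed



lemma powi_prod_one:
  fixes \<xi> :: complex assumes xi: "\<xi> \<noteq> 0"
  shows "(\<Prod>r<n. \<xi> powi (2 * int r + 1 - int n)) = 1"
proof -
  have s: "(\<Sum>r<n. 2 * r + 1) = n * n" by (induction n) auto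
  have "(\<Prod>r<n. \<xi> powi (2 * int r + 1 - int n)) = (\<Prod>r<n. \<xi> ^ (2 * r + 1) / \<xi> ^ n)"
  proof (intro prod.cong refl)
    fix r
    have e: "2 * int r + 1 - int n = int (2 * r + 1) - int n" by simp
    show "\<xi> powi (2 * int r + 1 - int n) = \<xi> ^ (2 * r + 1) / \<xi> ^ n"
      unfolding e power_int_diff[OF disjI1[OF xi]] power_int_of_nat ..
  qed
  also have "\<dots> = (\<Prod>r<n. \<xi> ^ (2 * r + 1)) / (\<Prod>r<n. \<xi> ^ n)" by (rule prod_dividef)
  also have "(\<Prod>r<n. \<xi> ^ (2 * r + 1)) = \<xi> ^ (n * n)" unfolding power_sum[symmetric] s ..
  also have "(\<Prod>r<n. \<xi> ^ n) = \<xi> ^ (n * n)" by (simp add: power_mult)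
  finally show ?thesis using xi by simp
qed

lemma prod_triangle_swap:
  "(\<Prod>k<n. \<Prod>l<k. f k l) = (\<Prod>l<n. \<Prod>k\<in>{l<..<n}. f k (l::nat)) "
proof (induction n)
  case 0 then show ?case by simp
next
  case (Suc n)
  have e: "{l<..<Suc n} = insert n {l<..<n}" if "l < n" for l using that by auto
  have "(\<Prod>l<Suc n. \<Prod>k\<in>{l<..<Suc n}. f k l) = (\<Prod>l<n. \<Prod>k\<in>{l<..<Suc n}. f k l)"
  proof -
    have "{n<..<Suc n} = {}" by auto
    then show ?thesis by simp
  qed
  also have "\<dots> = (\<Prod>l<n. f n l * (\<Prod>k\<in>{l<..<n}. f k l))"
    by (intro prod.cong refl) (simp add: e)
  also have "\<dots> = (\<Prod>l<n. f n l) * (\<Prod>l<n. \<Prod>k\<in>{l<..<n}. f k l)" by (rule prod.distrib)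
  finally show ?case using Suc.IH by (simp add: mult.commute)
qed

lemma prod_offdiag:
  "(\<Prod>k<n. \<Prod>l\<in>{..<n}-{k}. f k l) = (\<Prod>k<n. \<Prod>l\<in>{k<..<n}. f k l) * (\<Prod>k<n. \<Prod>l\<in>{k<..<n}. f l (k::nat))"
proof -
  have e: "{..<n}-{k} = {..<k} \<union> {k<..<n}" if "k < n" for k using that by auto
  have "(\<Prod>k<n. \<Prod>l\<in>{..<n}-{k}. f k l) = (\<Prod>k<n. (\<Prod>l<k. f k l) * (\<Prod>l\<in>{k<..<n}. f k l))"
    by (intro prod.cong refl, subst e, simp, rule prod.union_disjoint) auto
  also have "\<dots> = (\<Prod>k<n. \<Prod>l<k. f k l) * (\<Prod>k<n. \<Prod>l\<in>{k<..<n}. f k l)" by (rule prod.distrib)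
  finally show ?thesis by (simp add: prod_triangle_swap mult.commute)
qed



lemma core:
  fixes u w :: "nat \<Rightarrow> complex"
  assumes inj: "inj_on (\<lambda>k. u (Suc k)) {..<n}" and g: "\<gamma> \<noteq> 0" and xi: "\<xi>0 \<noteq> 0"
    and wnz: "\<And>j. j < n \<Longrightarrow> w j \<noteq> 0"
    and d1: "\<And>k j. k < n \<Longrightarrow> j < n \<Longrightarrow> 1 - u (Suc k) * w j \<noteq> 0"
    and d2: "\<And>k j. k < n \<Longrightarrow> j < n \<Longrightarrow> 1 - q * u (Suc k) * w j \<noteq> 0"
  shows "det (mat n n (\<lambda>(r,j). MM n q \<gamma> s0 \<xi>0 u (r+1) (w j))) * (\<Prod>k<n. \<Prod>l\<in>{k<..<n}. (u (Suc k) - u (Suc l)))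
    = (\<Prod>j<n. \<Prod>l<n. (1 - q * u (Suc l) * w j)) * det (mat n n (\<lambda>(k,j). ZZ q \<gamma> s0 \<xi>0 (u (Suc k)) (w j)))"
proof -
  define x where "x k = u (Suc k)" for k
  have injx: "inj_on x {..<n}" using inj unfolding x_def .
  define pd where "pd k = (\<Prod>l\<in>{..<n}-{k}. (x k - x l))" for k
  define D where "D j = (\<Prod>l<n. (1 - q * x l * w j))" for j
  define c where "c r = \<xi>0 powi (2 * int r + 1 - int n)" for r
  have entry: "MM n q \<gamma> s0 \<xi>0 u (Suc r) (w j) = (\<Sum>k<n. (c r * (x k ^ r * (1 / pd k))) * (ZZ q \<gamma> s0 \<xi>0 (x k) (w j) * D j))"
    if r: "r < n" and j: "j < n" for r j
  proof -
    have "MM n q \<gamma> s0 \<xi>0 u (Suc r) (w j) = c r * (w j ^ (n - 1 - r) * (alphaZ s0 \<xi>0 (w j) * (\<Prod>l<n. (1 - q * w j * x l) / (1 - w j * x l)) + betaZ q \<gamma> s0 \<xi>0 (w j) * q ^ (n - 1 - r)))"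
      using MM_eq[OF r wnz[OF j] g xi, where u=u and q=q] unfolding c_def x_def by simp
    also have "\<dots> = c r * (\<Sum>k<n. (x k ^ r / pd k) * (D j * ZZ q \<gamma> s0 \<xi>0 (x k) (w j)))"
      unfolding pd_def D_def
      by (subst row_ident[OF injx r wnz[OF j] g xi]) (use d1 d2 j in \<open>auto simp: x_def\<close>)
    also have "\<dots> = (\<Sum>k<n. (c r * (x k ^ r * (1 / pd k))) * (ZZ q \<gamma> s0 \<xi>0 (x k) (w j) * D j))"
      by (simp add: sum_distrib_left algebra_simps)
    finally show ?thesis .
  qed
  have "det (mat n n (\<lambda>(r,j). MM n q \<gamma> s0 \<xi>0 u (r+1) (w j)))
      = det (mat n n (\<lambda>(r,j). (\<Sum>k<n. (c r * (x k ^ r * (1 / pd k))) * (ZZ q \<gamma> s0 \<xi>0 (x k) (w j) * D j))))"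
    by (rule arg_cong[of _ _ det], rule eq_matI) (auto simp: entry)
  also have "\<dots> = det (mat n n (\<lambda>(r,k). c r * (x k ^ r * (1 / pd k)))) * det (mat n n (\<lambda>(k,j). ZZ q \<gamma> s0 \<xi>0 (x k) (w j) * D j))"
    by (rule det_mat_mult_entry)
  also have "det (mat n n (\<lambda>(r,k). c r * (x k ^ r * (1 / pd k)))) = (\<Prod>r<n. c r) * det (mat n n (\<lambda>(r,k). x k ^ r * (1 / pd k)))"
    by (rule det_scale_rows)
  also have "det (mat n n (\<lambda>(r,k). x k ^ r * (1 / pd k))) = (\<Prod>k<n. 1 / pd k) * det (mat n n (\<lambda>(r,k). x k ^ r))"
    by (rule det_scale_cols)
  also have "det (mat n n (\<lambda>(k,j). ZZ q \<gamma> s0 \<xi>0 (x k) (w j) * D j)) = (\<Prod>j<n. D j) * det (mat n n (\<lambda>(k,j). ZZ q \<gamma> s0 \<xi>0 (x k) (w j)))"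
    by (rule det_scale_cols)
  also have "(\<Prod>r<n. c r) = 1" unfolding c_def by (rule powi_prod_one[OF xi])
  also have "det (mat n n (\<lambda>(r,k). x k ^ r)) = (\<Prod>k<n. \<Prod>l\<in>{k<..<n}. (x l - x k))"
    by (rule vandermonde_det)
  finally have X: "det (mat n n (\<lambda>(r,j). MM n q \<gamma> s0 \<xi>0 u (r+1) (w j))) =
     (\<Prod>k<n. 1 / pd k) * (\<Prod>k<n. \<Prod>l\<in>{k<..<n}. (x l - x k)) * ((\<Prod>j<n. D j) * det (mat n n (\<lambda>(k,j). ZZ q \<gamma> s0 \<xi>0 (x k) (w j))))"
    by simp
  have pdp: "(\<Prod>k<n. pd k) = (\<Prod>k<n. \<Prod>l\<in>{k<..<n}. (x k - x l)) * (\<Prod>k<n. \<Prod>l\<in>{k<..<n}. (x l - x k))"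
    unfolding pd_def by (rule prod_offdiag)
  have pdnz: "(\<Prod>k<n. pd k) \<noteq> 0"
    unfolding pd_def using injx by (auto simp: prod_zero_iff inj_on_def)
  have "(\<Prod>k<n. 1 / pd k) * (\<Prod>k<n. \<Prod>l\<in>{k<..<n}. (x l - x k)) * (\<Prod>k<n. \<Prod>l\<in>{k<..<n}. (x k - x l)) = 1"
    using pdnz unfolding prod_dividef pdp by (simp add: field_simps)
  then show ?thesis unfolding X unfolding x_def[symmetric] D_def
    by (simp add: algebra_simps)
qed



lemma vdm_shift: "vdm N u = (\<Prod>k<N. \<Prod>l\<in>{k<..<N}. (u (Suc k) - u (Suc l)))"
proof -
  have e: "{Suc k + 1..N} = Suc ` {k<..<N}" for k
    by (simp add: atLeastSucLessThan_greaterThanLessThan[symmetric] atLeastLessThanSuc_atLeastAtMost)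
  have inner: "(\<Prod>j\<in>{Suc k + 1..N}. u (Suc k) - u j) = (\<Prod>l\<in>{k<..<N}. (u (Suc k) - u (Suc l)))" for k
    unfolding e by (subst prod.reindex) (auto simp: o_def)
  have "vdm N u = (\<Prod>k<N. \<Prod>j\<in>{Suc k + 1..N}. u (Suc k) - u j)"
    unfolding vdm_def using prod.atLeast1_atMost_eq[of "\<lambda>i. \<Prod>j\<in>{i+1..N}. u i - u j" N] by simp
  also have "\<dots> = (\<Prod>k<N. \<Prod>l\<in>{k<..<N}. (u (Suc k) - u (Suc l)))"
    by (simp only: inner)
  finally show ?thesis .
qed

lemma bigprod_shift:
  "(\<Prod>i\<in>{1..N}. \<Prod>j\<in>{1..N}. f i j) = (\<Prod>i<N. \<Prod>j<N. f (Suc i) (Suc j))"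
  using prod.atLeast1_atMost_eq[of "\<lambda>i. \<Prod>j\<in>{1..N}. f i j" N]
        prod.atLeast1_atMost_eq[of "f i" N for i] by simp

lemma ZZ_swap:
  assumes "\<xi>0 \<noteq> 0"
  shows "ZZ q \<gamma> s0 (1 / \<xi>0) a b = ZZ q \<gamma> s0 \<xi>0 b a"
proof -
  have den: "(1 - a*b)*(1-q*a*b) = (1 - b*a)*(1-q*b*a)" by (simp add: mult_ac)
  have num: "(1 - \<gamma>) * (q - inverse \<gamma> * s0^2) * (1 - a*b)
      + (1 - q) * (1 - (1 / \<xi>0) * s0 * a) * (1 - inverse (1 / \<xi>0) * s0 * b)
     = (1 - \<gamma>) * (q - inverse \<gamma> * s0^2) * (1 - b*a)
      + (1 - q) * (1 - \<xi>0 * s0 * b) * (1 - inverse \<xi>0 * s0 * a)"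
    using assms by (simp add: divide_inverse algebra_simps)
  show ?thesis unfolding ZZ_def den num ..
qed

lemma MMt_eq:
  assumes xi: "\<xi>0 \<noteq> 0" and r: "r < N" and g: "\<gamma> \<noteq> 0"
  shows "MMt N q \<gamma> s0 \<xi>0 v (Suc r) t = \<xi>0 powi (2 * int r + 1 - int N) * MM N q \<gamma> s0 (1 / \<xi>0) v (Suc r) t"
proof -
  define b where "b = 2 * int (Suc r) - int N"
  have e: "2 * int r + 1 - int N = b - 1" unfolding b_def by simp
  have p: "\<xi>0 powi (b - 1) * (1 / \<xi>0) powi b = 1 / \<xi>0"
  proof -
    have "\<xi>0 powi (b - 1) = \<xi>0 powi b / \<xi>0" using xi by (simp add: power_int_diff)
    moreover have "(1 / \<xi>0) powi b = 1 / \<xi>0 powi b" by (simp add: power_int_divide_distrib)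
    moreover have "\<xi>0 powi b \<noteq> 0" using xi by simp
    ultimately show ?thesis by simp
  qed
  define P where "P = (\<Prod>l\<in>{1..N}. (1 - q * t * v l) / (1 - t * v l))"
  define T where "T = t powi (int N - int (Suc r) - 1)"
  define B where "B = (1 - s0 * \<xi>0 * t) * (t - s0 / \<xi>0) * P - inverse \<gamma> * q ^ (N - Suc r) * (\<gamma> - s0 * \<xi>0 * t) * (\<gamma> * q * t - s0 / \<xi>0)"
  have br: "(1 - s0 / (1/\<xi>0) * t) * (t / (1/\<xi>0) - s0) * P - inverse \<gamma> * q^(N - Suc r) * (\<gamma> - s0/(1/\<xi>0)*t) * (\<gamma>*q*t/(1/\<xi>0) - s0) = \<xi>0 * B"
    unfolding B_def using xi g by (simp add: field_simps)
  have M1: "MM N q \<gamma> s0 (1 / \<xi>0) v (Suc r) t = (1 / \<xi>0) powi b * T * (\<xi>0 * B)"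
    unfolding MM_def P_def[symmetric] b_def[symmetric] T_def[symmetric] br ..
  have M2: "MMt N q \<gamma> s0 \<xi>0 v (Suc r) t = T * B"
    unfolding MMt_def T_def B_def P_def by simp
  have "\<xi>0 powi (b - 1) * ((1 / \<xi>0) powi b * T * (\<xi>0 * B)) = (\<xi>0 powi (b - 1) * (1 / \<xi>0) powi b) * \<xi>0 * (T * B)"
    by (simp add: mult_ac)
  also have "\<dots> = T * B" unfolding p using xi by simp
  finally show ?thesis unfolding e M1 M2 by simp
qed



theorem theorem4p1:
  fixes N :: nat and q \<gamma> s0 \<xi>0 :: complex and u v :: "nat \<Rightarrow> complex"
  assumes "N \<ge> 1" and "\<gamma> \<noteq> 0" and "\<xi>0 \<noteq> 0"
    and "\<And>i j. i \<in> {1..N} \<Longrightarrow> j \<in> {1..N} \<Longrightarrow> 1 - u i * v j \<noteq> 0"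
    and "\<And>i j. i \<in> {1..N} \<Longrightarrow> j \<in> {1..N} \<Longrightarrow> 1 - q * u i * v j \<noteq> 0"
    and "\<And>i j. i \<in> {1..N} \<Longrightarrow> j \<in> {1..N} \<Longrightarrow> i \<noteq> j \<Longrightarrow> u i \<noteq> u j"
    and "\<And>i j. i \<in> {1..N} \<Longrightarrow> j \<in> {1..N} \<Longrightarrow> i \<noteq> j \<Longrightarrow> v i \<noteq> v j"
    and "\<And>i. i \<in> {1..N} \<Longrightarrow> u i \<noteq> 0"
    and "\<And>i. i \<in> {1..N} \<Longrightarrow> v i \<noteq> 0"
  shows "(\<Prod>i\<in>{1..N}. \<Prod>j\<in>{1..N}. 1 - q * u i * v j) / (vdm N u * vdm N v)
           * det (mat N N (\<lambda>(i, j). ZZ q \<gamma> s0 \<xi>0 (u (i+1)) (v (j+1))))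
         = det (mat N N (\<lambda>(i, j). MM N q \<gamma> s0 \<xi>0 u (i+1) (v (j+1)))) / vdm N v
       \<and> det (mat N N (\<lambda>(i, j). MM N q \<gamma> s0 \<xi>0 u (i+1) (v (j+1)))) / vdm N v
         = det (mat N N (\<lambda>(i, j). MMt N q \<gamma> s0 \<xi>0 v (i+1) (u (j+1)))) / vdm N u"
proof -
  note g = assms(2) and xi = assms(3)
  have injU: "inj_on (\<lambda>k. u (Suc k)) {..<N}" unfolding inj_on_def
  proof (intro ballI impI, rule ccontr)
    fix a b assume "a \<in> {..<N}" "b \<in> {..<N}" "u (Suc a) = u (Suc b)" "a \<noteq> b"
    then show False using assms(6)[of "Suc a" "Suc b"] by auto
  qed
  have injV: "inj_on (\<lambda>k. v (Suc k)) {..<N}" unfolding inj_on_def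
  proof (intro ballI impI, rule ccontr)
    fix a b assume "a \<in> {..<N}" "b \<in> {..<N}" "v (Suc a) = v (Suc b)" "a \<noteq> b"
    then show False using assms(7)[of "Suc a" "Suc b"] by auto
  qed
  have unz: "\<And>j. j < N \<Longrightarrow> u (Suc j) \<noteq> 0" using assms(8) by auto
  have vnz: "\<And>j. j < N \<Longrightarrow> v (Suc j) \<noteq> 0" using assms(9) by auto
  have d1: "\<And>k j. k < N \<Longrightarrow> j < N \<Longrightarrow> 1 - u (Suc k) * v (Suc j) \<noteq> 0" using assms(4) by auto
  have d2: "\<And>k j. k < N \<Longrightarrow> j < N \<Longrightarrow> 1 - q * u (Suc k) * v (Suc j) \<noteq> 0" using assms(5) by auto
  have d1': "\<And>k j. k < N \<Longrightarrow> j < N \<Longrightarrow> 1 - v (Suc k) * u (Suc j) \<noteq> 0"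
    using d1 by (simp add: mult.commute)
  have d2': "\<And>k j. k < N \<Longrightarrow> j < N \<Longrightarrow> 1 - q * v (Suc k) * u (Suc j) \<noteq> 0"
    using d2 by (simp add: mult_ac)
  have xi': "1 / \<xi>0 \<noteq> 0" using xi by simp
  define PP where "PP = (\<Prod>i\<in>{1..N}. \<Prod>j\<in>{1..N}. 1 - q * u i * v j)"
  define dZ where "dZ = det (mat N N (\<lambda>(i, j). ZZ q \<gamma> s0 \<xi>0 (u (i+1)) (v (j+1))))"
  define dM where "dM = det (mat N N (\<lambda>(i, j). MM N q \<gamma> s0 \<xi>0 u (i+1) (v (j+1))))"
  define dMt where "dMt = det (mat N N (\<lambda>(i, j). MMt N q \<gamma> s0 \<xi>0 v (i+1) (u (j+1))))"
  have vu: "vdm N u \<noteq> 0" unfolding vdm_shift by (auto simp: prod_zero_iff dest!: inj_onD[OF injU])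
  have vv: "vdm N v \<noteq> 0" unfolding vdm_shift by (auto simp: prod_zero_iff dest!: inj_onD[OF injV])
  have PP1: "PP = (\<Prod>j<N. \<Prod>l<N. 1 - q * u (Suc l) * v (Suc j))"
    unfolding PP_def bigprod_shift by (rule prod.swap)
  have PP2: "PP = (\<Prod>j<N. \<Prod>l<N. 1 - q * v (Suc l) * u (Suc j))"
    unfolding PP_def bigprod_shift by (simp add: mult_ac)
  have C1: "dM * vdm N u = PP * dZ"
    using core[OF injU g xi vnz d1 d2] unfolding dM_def dZ_def PP1 vdm_shift by simp
  have "dMt = det (mat N N (\<lambda>(i, j). \<xi>0 powi (2 * int i + 1 - int N) * MM N q \<gamma> s0 (1 / \<xi>0) v (Suc i) (u (Suc j))))"
    unfolding dMt_def by (rule arg_cong[of _ _ det], rule eq_matI) (auto simp: MMt_eq[OF xi _ g])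
  also have "\<dots> = det (mat N N (\<lambda>(i, j). MM N q \<gamma> s0 (1 / \<xi>0) v (Suc i) (u (Suc j))))"
    by (subst det_scale_rows) (simp add: powi_prod_one[OF xi])
  finally have dMt': "dMt = det (mat N N (\<lambda>(i, j). MM N q \<gamma> s0 (1 / \<xi>0) v (Suc i) (u (Suc j))))" .
  have tr: "det (mat N N (\<lambda>(k, j). ZZ q \<gamma> s0 (1 / \<xi>0) (v (Suc k)) (u (Suc j)))) = dZ"
  proof -
    have "mat N N (\<lambda>(k, j). ZZ q \<gamma> s0 (1 / \<xi>0) (v (Suc k)) (u (Suc j)))
        = transpose_mat (mat N N (\<lambda>(i, j). ZZ q \<gamma> s0 \<xi>0 (u (i+1)) (v (j+1))))"
      by (rule eq_matI) (auto simp: ZZ_swap[OF xi])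
    then show ?thesis unfolding dZ_def by (simp add: det_transpose[OF mat_carrier])
  qed
  have C2: "dMt * vdm N v = PP * dZ"
  proof -
    have "det (mat N N (\<lambda>(r,j). MM N q \<gamma> s0 (1 / \<xi>0) v (r+1) (u (Suc j)))) * (\<Prod>k<N. \<Prod>l\<in>{k<..<N}. (v (Suc k) - v (Suc l)))
    = (\<Prod>j<N. \<Prod>l<N. (1 - q * v (Suc l) * u (Suc j))) * det (mat N N (\<lambda>(k,j). ZZ q \<gamma> s0 (1 / \<xi>0) (v (Suc k)) (u (Suc j))))"
      by (rule core[OF injV g xi' unz d1' d2'])
    then show ?thesis unfolding dMt' tr PP2 vdm_shift by simp
  qed
  have L: "PP / (vdm N u * vdm N v) * dZ = dM / vdm N v"
    using C1 vu vv by (simp add: field_simps)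
  have R: "dM / vdm N v = dMt / vdm N u"
    using C1 C2 vu vv by (simp add: field_simps)
  show ?thesis unfolding PP_def[symmetric] dZ_def[symmetric] dM_def[symmetric] dMt_def[symmetric] using L R by (rule conjI)
qed

end
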